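(* Every bitopological space $(X,\tau[tt],\tau[ff])$ that is Hausdorff (i.e. whose associated $\mathbb{B}$-topological space $(X,\tau)$ is Hausdorff) is d-sober.
   Context: $\mathbb{B}=\{0,1,tt,ff\}$ is the four-element Boolean algebra with bottom $0$, top $1$, and $tt,ff$ incomparable complements; $a\to b=\neg a\vee b$. A bitopological space $(X,\tau[tt],\tau[ff])$ corresponds to the $\mathbb{B}$-topology $\tau=\{\lambda\colon X\to\mathbb{B}: \lambda[tt]\in\tau[tt],\ \lambda[ff]\in\tau[ff]\}$, where $\lambda[b]=\{x:\lambda(x)\ge b\}$. Specialization $\mathbb{B}$-order: $\Omega(\tau)(x,y)=\bigwedge_{\lambda\in\tau}(\lambda(x)\to\lambda(y))$. $(X,\tau)$ is $T_0$ if $\Omega(\tau)(x,y)=1=\Omega(\tau)(y,x)$ implies $x=y$; it is $R_1$ if $\Omega(\tau)$, viewed as a map $X\times X\to\mathbb{B}$, is a closed set of the product $\mathbb{B}$-topological space $(X,\tau)\times(X,\tau)$ (the $\mathbb{B}$-topology on $X\times X$ generated by $\{\lambda\circ\pi_1,\lambda\circ\pi_2:\lambda\in\tau\}$ together with constants; a $\mathbb{B}$-valued set $\mu$ is closed if $\neg\mu$ is open); it is Hausdorff if it is $T_0$ and $R_1$. (Equivalently, Hausdorff means: the topological space $(X,\tau[tt]\vee\tau[ff])$ is $T_0$ and both $(X,\tau[tt])$ and $(X,\tau[ff])$ are $R_1$, where a topological space is $R_1$ if any two points with distinct closures of their singletons have disjoint neighbourhoods.) A d-point of $(X,\tau[tt],\tau[ff])$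 is a pair of frame homomorphisms $p_{tt}\colon\tau[tt]\to\{0,1\}$, $p_{ff}\colon\tau[ff]\to\{0,1\}$ (preserving finite meets and arbitrary joins) such that: if $U\in\tau[tt]$, $V\in\tau[ff]$ and $U\cap V=\emptyset$ then $p_{tt}(U)=0$ or $p_{ff}(V)=0$; and if $U\cup V=X$ then $p_{tt}(U)=1$ or $p_{ff}(V)=1$. Each $x\in X$ gives the d-point $[x]$ with $[x]_{tt}(U)=1\iff x\in U$ and $[x]_{ff}(V)=1\iff x\in V$. The space is d-sober if every d-point equals $[x]$ for a unique $x\in X$. *)

theory Defs
  imports "HOL-Analysis.Analysis"
begin

datatype bb = B0 | B1 | Btt | Bff

definition ble :: "bb \<Rightarrow> bb \<Rightarrow> bool" where
  "ble a b \<longleftrightarrow> a = B0 \<or> b = B1 \<or> a = b"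

text \<open>Build an element from its two "coordinates" (a \<ge> tt, a \<ge> ff).\<close>
definition bmk :: "bool \<Rightarrow> bool \<Rightarrow> bb" where
  "bmk p q = (if p \<and> q then B1 else if p then Btt else if q then Bff else B0)"

definition bmeet :: "bb \<Rightarrow> bb \<Rightarrow> bb" where
  "bmeet a b = bmk (ble Btt a \<and> ble Btt b) (ble Bff a \<and> ble Bff b)"

definition bjoin :: "bb \<Rightarrow> bb \<Rightarrow> bb" where
  "bjoin a b = bmk (ble Btt a \<or> ble Btt b) (ble Bff a \<or> ble Bff b)"

definition bneg :: "bb \<Rightarrow> bb" where
  "bneg a = (case a of B0 \<Rightarrow> B1 | B1 \<Rightarrow> B0 | Btt \<Rightarrow> Bff | Bff \<Rightarrow> Btt)"

definition bimp :: "bb \<Rightarrow> bb \<Rightarrow> bb" where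
  "bimp a b = bjoin (bneg a) b"

definition bInf :: "bb set \<Rightarrow> bb" where
  "bInf S = bmk (\<forall>s\<in>S. ble Btt s) (\<forall>s\<in>S. ble Bff s)"

definition bSup :: "bb set \<Rightarrow> bb" where
  "bSup S = bmk (\<exists>s\<in>S. ble Btt s) (\<exists>s\<in>S. ble Bff s)"

text \<open>A bitopological space on the carrier X is a pair of topologies T1 = tau[tt],
  T2 = tau[ff] with topspace X. B-valued sets are functions 'a => bb; only their
  values on X matter. lambda[b] = {x in X. lambda x >= b}.\<close>

definition bcut :: "'a set \<Rightarrow> ('a \<Rightarrow> bb) \<Rightarrow> bb \<Rightarrow> 'a set" where
  "bcut X l b = {x \<in> X. ble b (l x)}"

definition btop :: "'a topology \<Rightarrow> 'a topology \<Rightarrow> ('a \<Rightarrow> bb) set" where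
  "btop T1 T2 = {l. openin T1 (bcut (topspace T1) l Btt) \<and> openin T2 (bcut (topspace T2) l Bff)}"

definition spec_order :: "'a topology \<Rightarrow> 'a topology \<Rightarrow> 'a \<Rightarrow> 'a \<Rightarrow> bb" where
  "spec_order T1 T2 x y = bInf {bimp (l x) (l y) | l. l \<in> btop T1 T2}"

definition btop_T0 :: "'a topology \<Rightarrow> 'a topology \<Rightarrow> bool" where
  "btop_T0 T1 T2 \<longleftrightarrow> (\<forall>x\<in>topspace T1. \<forall>y\<in>topspace T1.
     spec_order T1 T2 x y = B1 \<and> spec_order T1 T2 y x = B1 \<longrightarrow> x = y)"

inductive_set bgen :: "('b \<Rightarrow> bb) set \<Rightarrow> ('b \<Rightarrow> bb) set" for G where
  base: "g \<in> G \<Longrightarrow> g \<in> bgen G"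
| const: "(\<lambda>_. c) \<in> bgen G"
| meet: "f \<in> bgen G \<Longrightarrow> g \<in> bgen G \<Longrightarrow> (\<lambda>p. bmeet (f p) (g p)) \<in> bgen G"
| join: "\<forall>f\<in>F. f \<in> bgen G \<Longrightarrow> (\<lambda>p. bSup {f p | f. f \<in> F}) \<in> bgen G"

definition prod_btop :: "('a \<Rightarrow> bb) set \<Rightarrow> ('a \<times> 'a \<Rightarrow> bb) set" where
  "prod_btop tau = bgen ({(\<lambda>p. l (fst p)) | l. l \<in> tau} \<union> {(\<lambda>p. l (snd p)) | l. l \<in> tau})"

text \<open>R1: the specialization order, as a B-valued set on X x X, is closed in the
  product, i.e. its negation is open (agrees on X x X with an open B-valued set).\<close>
definition btop_R1 :: "'a topology \<Rightarrow> 'a topology \<Rightarrow> bool" where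
  "btop_R1 T1 T2 \<longleftrightarrow> (\<exists>nu\<in>prod_btop (btop T1 T2).
     \<forall>x\<in>topspace T1. \<forall>y\<in>topspace T1. nu (x, y) = bneg (spec_order T1 T2 x y))"

definition btop_Hausdorff :: "'a topology \<Rightarrow> 'a topology \<Rightarrow> bool" where
  "btop_Hausdorff T1 T2 \<longleftrightarrow> btop_T0 T1 T2 \<and> btop_R1 T1 T2"

text \<open>Frame homomorphism from the opens of T to {0,1}, represented as a predicate
  on sets (only its values on open sets matter).\<close>
definition frame_hom2 :: "'a topology \<Rightarrow> ('a set \<Rightarrow> bool) \<Rightarrow> bool" where
  "frame_hom2 T p \<longleftrightarrow>
     p (topspace T) \<and>
     (\<forall>U V. openin T U \<and> openin T V \<longrightarrow> p (U \<inter> V) = (p U \<and> p V)) \<and>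
     (\<forall>\<U>. (\<forall>U\<in>\<U>. openin T U) \<longrightarrow> p (\<Union>\<U>) = (\<exists>U\<in>\<U>. p U))"

definition d_point :: "'a topology \<Rightarrow> 'a topology \<Rightarrow> ('a set \<Rightarrow> bool) \<Rightarrow> ('a set \<Rightarrow> bool) \<Rightarrow> bool" where
  "d_point T1 T2 p q \<longleftrightarrow> frame_hom2 T1 p \<and> frame_hom2 T2 q \<and>
     (\<forall>U V. openin T1 U \<and> openin T2 V \<and> U \<inter> V = {} \<longrightarrow> \<not> p U \<or> \<not> q V) \<and>
     (\<forall>U V. openin T1 U \<and> openin T2 V \<and> U \<union> V = topspace T1 \<longrightarrow> p U \<or> q V)"

definition d_point_eq :: "'a topology \<Rightarrow> 'a topology \<Rightarrow> ('a set \<Rightarrow> bool) \<times> ('a set \<Rightarrow> bool)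
    \<Rightarrow> ('a set \<Rightarrow> bool) \<times> ('a set \<Rightarrow> bool) \<Rightarrow> bool" where
  "d_point_eq T1 T2 P Q \<longleftrightarrow> (\<forall>U. openin T1 U \<longrightarrow> fst P U = fst Q U) \<and>
                              (\<forall>V. openin T2 V \<longrightarrow> snd P V = snd Q V)"

definition pt_of :: "'a \<Rightarrow> ('a set \<Rightarrow> bool) \<times> ('a set \<Rightarrow> bool)" where
  "pt_of x = ((\<lambda>U. x \<in> U), (\<lambda>V. x \<in> V))"

definition d_sober :: "'a topology \<Rightarrow> 'a topology \<Rightarrow> bool" where
  "d_sober T1 T2 \<longleftrightarrow> (\<forall>p q. d_point T1 T2 p q \<longrightarrow>
     (\<exists>!x. x \<in> topspace T1 \<and> d_point_eq T1 T2 (p, q) (pt_of x)))"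

end

theory Submission
  imports Defs
begin

lemma ble_mk: "ble Btt (bmk P Q) = P" "ble Bff (bmk P Q) = Q"
  by (auto simp: ble_def bmk_def)

lemma ble_neg: "ble Btt (bneg a) = (\<not> ble Btt a)" "ble Bff (bneg a) = (\<not> ble Bff a)"
  by (cases a; simp add: ble_def bneg_def)+

lemma B1_iff: "a = B1 \<longleftrightarrow> ble Btt a \<and> ble Bff a"
  by (cases a) (auto simp: ble_def)

lemma ble_meet: "c = Btt \<or> c = Bff \<Longrightarrow> ble c (bmeet u v) \<longleftrightarrow> ble c u \<and> ble c v"
  by (auto simp: bmeet_def ble_mk)

lemma ble_Sup: "c = Btt \<or> c = Bff \<Longrightarrow> ble c (bSup S) \<longleftrightarrow> (\<exists>s\<in>S. ble c s)"
  by (auto simp: bSup_def ble_mk)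

lemma ble_imp: "c = Btt \<or> c = Bff \<Longrightarrow> ble c (bimp a b) \<longleftrightarrow> (ble c a \<longrightarrow> ble c b)"
  by (auto simp: bimp_def bjoin_def ble_mk ble_neg)

lemma ble_Inf: "c = Btt \<or> c = Bff \<Longrightarrow> ble c (bInf S) \<longleftrightarrow> (\<forall>s\<in>S. ble c s)"
  by (auto simp: bInf_def ble_mk)

lemma spec_tt:
  assumes "topspace T1 = topspace T2" "x \<in> topspace T1" "y \<in> topspace T1"
  shows "ble Btt (spec_order T1 T2 x y) \<longleftrightarrow> (\<forall>U. openin T1 U \<longrightarrow> x \<in> U \<longrightarrow> y \<in> U)"
proof
  assume h: "ble Btt (spec_order T1 T2 x y)"
  show "\<forall>U. openin T1 U \<longrightarrow> x \<in> U \<longrightarrow> y \<in> U"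
  proof (intro allI impI)
    fix U assume U: "openin T1 U" "x \<in> U"
    define l where "l = (\<lambda>z. if z \<in> U then Btt else B0)"
    have "bcut (topspace T1) l Btt = U" using openin_subset[OF U(1)]
      by (auto simp: bcut_def l_def ble_def)
    moreover have "bcut (topspace T2) l Bff = {}"
      by (auto simp: bcut_def l_def ble_def)
    ultimately have "l \<in> btop T1 T2" using U by (simp add: btop_def)
    hence "ble Btt (bimp (l x) (l y))" using h
      by (auto simp: spec_order_def ble_Inf)
    hence "ble Btt (l x) \<longrightarrow> ble Btt (l y)" by (simp add: ble_imp)
    thus "y \<in> U" using U by (auto simp: l_def ble_def split: if_splits)
  qed
next
  assume h: "\<forall>U. openin T1 U \<longrightarrow> x \<in> U \<longrightarrow> y \<in> U"
  show "ble Btt (spec_order T1 T2 x y)"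
    unfolding spec_order_def
  proof (subst ble_Inf, simp, clarify)
    fix l assume "l \<in> btop T1 T2"
    hence "openin T1 (bcut (topspace T1) l Btt)" by (simp add: btop_def)
    thus "ble Btt (bimp (l x) (l y))" using h assms
      by (auto simp: ble_imp bcut_def)
  qed
qed

lemma spec_ff:
  assumes "topspace T1 = topspace T2" "x \<in> topspace T1" "y \<in> topspace T1"
  shows "ble Bff (spec_order T1 T2 x y) \<longleftrightarrow> (\<forall>U. openin T2 U \<longrightarrow> x \<in> U \<longrightarrow> y \<in> U)"
proof
  assume h: "ble Bff (spec_order T1 T2 x y)"
  show "\<forall>U. openin T2 U \<longrightarrow> x \<in> U \<longrightarrow> y \<in> U"
  proof (intro allI impI)
    fix U assume U: "openin T2 U" "x \<in> U"
    define l where "l = (\<lambda>z. if z \<in> U then Bff else B0)"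
    have "bcut (topspace T2) l Bff = U" using openin_subset[OF U(1)]
      by (auto simp: bcut_def l_def ble_def)
    moreover have "bcut (topspace T1) l Btt = {}"
      by (auto simp: bcut_def l_def ble_def)
    ultimately have "l \<in> btop T1 T2" using U by (simp add: btop_def)
    hence "ble Bff (bimp (l x) (l y))" using h
      by (auto simp: spec_order_def ble_Inf)
    hence "ble Bff (l x) \<longrightarrow> ble Bff (l y)" by (simp add: ble_imp)
    thus "y \<in> U" using U by (auto simp: l_def ble_def split: if_splits)
  qed
next
  assume h: "\<forall>U. openin T2 U \<longrightarrow> x \<in> U \<longrightarrow> y \<in> U"
  show "ble Bff (spec_order T1 T2 x y)"
    unfolding spec_order_def
  proof (subst ble_Inf, simp, clarify)
    fix l assume "l \<in> btop T1 T2"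
    hence "openin T2 (bcut (topspace T2) l Bff)" by (simp add: btop_def)
    thus "ble Bff (bimp (l x) (l y))" using h assms
      by (auto simp: ble_imp bcut_def)
  qed
qed

definition boxp :: "'a topology \<Rightarrow> bb \<Rightarrow> ('a \<times> 'a \<Rightarrow> bb) \<Rightarrow> bool" where
  "boxp T c f \<longleftrightarrow> (\<forall>a\<in>topspace T. \<forall>b\<in>topspace T. ble c (f (a,b)) \<longrightarrow>
     (\<exists>W Vv. openin T W \<and> openin T Vv \<and> a \<in> W \<and> b \<in> Vv \<and> (\<forall>s\<in>W. \<forall>t\<in>Vv. ble c (f (s,t)))))"

lemma boxpD:
  assumes "boxp T c f" "a \<in> topspace T" "b \<in> topspace T" "ble c (f (a,b))"
  shows "\<exists>W Vv. openin T W \<and> openin T Vv \<and> a \<in> W \<and> b \<in> Vv \<and> (\<forall>s\<in>W. \<forall>t\<in>Vv. ble c (f (s,t)))"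
  using assms by (simp add: boxp_def)

lemma bgen_box:
  assumes "f \<in> bgen G" "c = Btt \<or> c = Bff" "\<forall>g\<in>G. boxp T c g"
  shows "boxp T c f"
  using assms(1)
proof induct
  case (base g) thus ?case using assms by blast
next
  case (const d)
  show ?case unfolding boxp_def
    by (intro ballI impI exI[of _ "topspace T"]) auto
next
  case (meet f g)
  show ?case unfolding boxp_def
  proof (intro ballI impI)
    fix a b assume ab: "a \<in> topspace T" "b \<in> topspace T" "(ble c ((\<lambda>p. bmeet (f p) (g p)) (a, b)))"
    hence fa: "ble c (f (a,b))" and ga: "ble c (g (a,b))" using ble_meet[OF assms(2)] by auto
    obtain W1 O1 where 1: "openin T W1" "openin T O1" "a \<in> W1" "b \<in> O1" "\<forall>s\<in>W1. \<forall>t\<in>O1. ble c (f (s,t))"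
      using boxpD[OF meet(2) ab(1,2) fa] by blast
    obtain W2 O2 where 2: "openin T W2" "openin T O2" "a \<in> W2" "b \<in> O2" "\<forall>s\<in>W2. \<forall>t\<in>O2. ble c (g (s,t))"
      using boxpD[OF meet(4) ab(1,2) ga] by blast
    have "\<forall>s\<in>W1 \<inter> W2. \<forall>t\<in>O1 \<inter> O2. ble c ((\<lambda>p. bmeet (f p) (g p)) (s, t))"
      using 1(5) 2(5) ble_meet[OF assms(2)] by simp
    moreover have "openin T (W1 \<inter> W2)" "openin T (O1 \<inter> O2)" using 1 2 by auto
    ultimately show "\<exists>W Vv. openin T W \<and> openin T Vv \<and> a \<in> W \<and> b \<in> Vv \<and>
        (\<forall>s\<in>W. \<forall>t\<in>Vv. ble c ((\<lambda>p. bmeet (f p) (g p)) (s, t)))"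
      using 1(3,4) 2(3,4) by blast
  qed
next
  case (join F)
  show ?case unfolding boxp_def
  proof (intro ballI impI)
    fix a b assume ab: "a \<in> topspace T" "b \<in> topspace T"
      "ble c ((\<lambda>p. bSup {f p |f. f \<in> F}) (a, b))"
    then obtain f where f: "f \<in> F" "ble c (f (a,b))"
      using ble_Sup[OF assms(2)] by auto
    have bf: "boxp T c f" using join f(1) by blast
    obtain W Vv where WV: "openin T W" "openin T Vv" "a \<in> W" "b \<in> Vv" "\<forall>s\<in>W. \<forall>t\<in>Vv. ble c (f (s,t))"
      using boxpD[OF bf ab(1,2) f(2)] by blast
    have "\<forall>s\<in>W. \<forall>t\<in>Vv. ble c ((\<lambda>p. bSup {f p |f. f \<in> F}) (s, t))"
      using WV(5) f(1) ble_Sup[OF assms(2)] by auto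
    thus "\<exists>W Vv. openin T W \<and> openin T Vv \<and> a \<in> W \<and> b \<in> Vv \<and>
        (\<forall>s\<in>W. \<forall>t\<in>Vv. ble c ((\<lambda>p. bSup {f p |f. f \<in> F}) (s, t)))"
      using WV by blast
  qed
qed

definition sepR :: "'a topology \<Rightarrow> bool" where
  "sepR T \<longleftrightarrow> (\<forall>x y U. x \<in> topspace T \<and> y \<in> topspace T \<and> openin T U \<and> y \<in> U \<and> x \<notin> U \<longrightarrow>
     (\<exists>W Vv. openin T W \<and> openin T Vv \<and> y \<in> W \<and> x \<in> Vv \<and> W \<inter> Vv = {}))"

lemma sepRD:
  assumes "sepR T" "x \<in> topspace T" "y \<in> topspace T" "openin T U" "y \<in> U" "x \<notin> U"
  shows "\<exists>W Vv. openin T W \<and> openin T Vv \<and> y \<in> W \<and> x \<in> Vv \<and> W \<inter> Vv = {}"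
  using assms unfolding sepR_def by blast

lemma sep_from:
  assumes "boxp T c nu"
    "\<forall>x\<in>topspace T. \<forall>y\<in>topspace T. ble c (nu (x,y)) \<longleftrightarrow> \<not> (\<forall>U. openin T U \<longrightarrow> x \<in> U \<longrightarrow> y \<in> U)"
  shows "sepR T"
  unfolding sepR_def
proof (intro allI impI)
  fix x y U assume h: "x \<in> topspace T \<and> y \<in> topspace T \<and> openin T U \<and> y \<in> U \<and> x \<notin> U"
  have yT: "y \<in> topspace T" and xT: "x \<in> topspace T" using h by simp_all
  have eq: "ble c (nu (y,x)) \<longleftrightarrow> \<not> (\<forall>U. openin T U \<longrightarrow> y \<in> U \<longrightarrow> x \<in> U)"
    using bspec[OF bspec[OF assms(2) yT] xT] .
  have "\<not> (\<forall>U. openin T U \<longrightarrow> y \<in> U \<longrightarrow> x \<in> U)" using h by blast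
  hence "ble c (nu (y,x))" using eq by simp
  then obtain W Vv where WO: "openin T W" "openin T Vv" "y \<in> W" "x \<in> Vv"
     "\<forall>s\<in>W. \<forall>t\<in>Vv. ble c (nu (s,t))"
    using boxpD[OF assms(1) yT xT] by blast
  have "W \<inter> Vv = {}"
  proof (rule ccontr)
    assume "W \<inter> Vv \<noteq> {}"
    then obtain z where zW: "z \<in> W" and zV: "z \<in> Vv" by blast
    have zT: "z \<in> topspace T" using zW openin_subset[OF WO(1)] by blast
    have eqz: "ble c (nu (z,z)) \<longleftrightarrow> \<not> (\<forall>U. openin T U \<longrightarrow> z \<in> U \<longrightarrow> z \<in> U)"
      using bspec[OF bspec[OF assms(2) zT] zT] .
    have "ble c (nu (z,z))" using bspec[OF bspec[OF WO(5) zW] zV] .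
    thus False using eqz by simp
  qed
  thus "\<exists>W Vv. openin T W \<and> openin T Vv \<and> y \<in> W \<and> x \<in> Vv \<and> W \<inter> Vv = {}"
    using WO(1-4) by blast
qed

lemma frame_top: "frame_hom2 T p \<Longrightarrow> p (topspace T)"
  unfolding frame_hom2_def by (elim conjE)

lemma frame_int: "frame_hom2 T p \<Longrightarrow> openin T U \<Longrightarrow> openin T V \<Longrightarrow> p (U \<inter> V) = (p U \<and> p V)"
  unfolding frame_hom2_def by (elim conjE) blast

lemma frame_Un: "frame_hom2 T p \<Longrightarrow> (\<And>U. U \<in> UU \<Longrightarrow> openin T U) \<Longrightarrow> p (\<Union>UU) = (\<exists>U\<in>UU. p U)"
proof -
  assume "frame_hom2 T p" "\<And>U. U \<in> UU \<Longrightarrow> openin T U"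
  moreover have "\<forall>UU. (\<forall>U\<in>UU. openin T U) \<longrightarrow> p (\<Union>UU) = (\<exists>U\<in>UU. p U)"
    using calculation(1) unfolding frame_hom2_def by (elim conjE)
  ultimately show ?thesis by blast
qed

lemma frame_empty: "frame_hom2 T p \<Longrightarrow> \<not> p {}"
  using frame_Un[of T p "{}"] by simp

lemma frame_point:
  assumes "frame_hom2 T p" "sepR T"
  shows "\<exists>x\<in>topspace T. \<forall>U. openin T U \<longrightarrow> (p U \<longleftrightarrow> x \<in> U)"
proof -
  define N where "N = {U. openin T U \<and> \<not> p U}"
  have "p (\<Union>N) = (\<exists>U\<in>N. p U)" by (rule frame_Un[OF assms(1)]) (simp add: N_def)
  hence "\<not> p (\<Union>N)" unfolding N_def by blast
  moreover have "p (topspace T)" using frame_top[OF assms(1)] .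
  ultimately have "\<Union>N \<noteq> topspace T" by auto
  moreover have "\<Union>N \<subseteq> topspace T" unfolding N_def using openin_subset by auto
  ultimately obtain x where x: "x \<in> topspace T" "x \<notin> \<Union>N" by blast
  have "p U \<longleftrightarrow> x \<in> U" if U: "openin T U" for U
  proof
    assume pU: "p U"
    show "x \<in> U"
    proof (rule ccontr)
      assume xU: "x \<notin> U"
      define WW where "WW = {W \<inter> U | W. openin T W \<and> (\<exists>Vv. openin T Vv \<and> x \<in> Vv \<and> W \<inter> Vv = {})}"
      have "\<Union>WW = U"
      proof
        show "\<Union>WW \<subseteq> U" unfolding WW_def by auto
        show "U \<subseteq> \<Union>WW"
        proof
          fix y assume y: "y \<in> U"
          hence yT: "y \<in> topspace T" using U openin_subset by blast
          obtain W Vv where "openin T W" "openin T Vv" "y \<in> W" "x \<in> Vv" "W \<inter> Vv = {}"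
            using sepRD[OF assms(2) x(1) yT U y xU] by blast
          thus "y \<in> \<Union>WW" unfolding WW_def using y by blast
        qed
      qed
      moreover have "p (\<Union>WW) = (\<exists>V\<in>WW. p V)"
        by (rule frame_Un[OF assms(1)]) (auto simp: WW_def U)
      ultimately have "\<exists>V\<in>WW. p V" using pU by simp
      then obtain W Vv where W: "openin T W" "openin T Vv" "x \<in> Vv" "W \<inter> Vv = {}" "p (W \<inter> U)"
        unfolding WW_def by blast
      have "p W" using W(5) frame_int[OF assms(1) W(1) U] by simp
      moreover have "p Vv"
      proof (rule ccontr)
        assume "\<not> p Vv"
        hence "Vv \<in> N" using W(2) N_def by simp
        thus False using x(2) W(3) by blast
      qed
      ultimately have "p (W \<inter> Vv)" using frame_int[OF assms(1) W(1) W(2)] by simp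
      thus False using W(4) frame_empty[OF assms(1)] by simp
    qed
  next
    assume xU: "x \<in> U"
    show "p U"
    proof (rule ccontr)
      assume "\<not> p U"
      hence "U \<in> N" using U N_def by simp
      thus False using x(2) xU by blast
    qed
  qed
  thus ?thesis using x(1) by blast
qed

theorem mainTheorem5:
  fixes T1 T2 :: "'a topology"
  assumes "topspace T1 = topspace T2"
    and "btop_Hausdorff T1 T2"
  shows "d_sober T1 T2"
proof -
  define X where "X = topspace T1"
  have X2: "topspace T2 = X" using assms(1) X_def by simp
  from assms(2) have T0: "btop_T0 T1 T2" and R1: "btop_R1 T1 T2"
    by (auto simp: btop_Hausdorff_def)
  from R1 obtain nu where nu: "nu \<in> prod_btop (btop T1 T2)"
    "\<forall>x\<in>X. \<forall>y\<in>X. nu (x, y) = bneg (spec_order T1 T2 x y)"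
    unfolding btop_R1_def X_def by blast
  let ?G = "{(\<lambda>p. l (fst p)) | l. l \<in> btop T1 T2} \<union> {(\<lambda>p. l (snd p)) | l. l \<in> btop T1 T2}"
  have genA: "\<forall>g\<in>?G. boxp T1 Btt g"
  proof
    fix g assume "g \<in> ?G"
    then obtain l where l: "l \<in> btop T1 T2" "g = (\<lambda>p. l (fst p)) \<or> g = (\<lambda>p. l (snd p))" by blast
    hence op: "openin T1 (bcut X l Btt)" by (simp add: btop_def X_def)
    show "boxp T1 Btt g" unfolding boxp_def
    proof (intro ballI impI)
      fix a b assume ab: "a \<in> topspace T1" "b \<in> topspace T1" "ble Btt (g (a,b))"
      show "\<exists>W Vv. openin T1 W \<and> openin T1 Vv \<and> a \<in> W \<and> b \<in> Vv \<and> (\<forall>s\<in>W. \<forall>t\<in>Vv. ble Btt (g (s,t)))"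
        using l(2)
      proof
        assume g: "g = (\<lambda>p. l (fst p))"
        show ?thesis using g ab op
          by (intro exI[of _ "bcut X l Btt"] exI[of _ "topspace T1"]) (auto simp: bcut_def X_def)
      next
        assume g: "g = (\<lambda>p. l (snd p))"
        show ?thesis using g ab op
          by (intro exI[of _ "topspace T1"] exI[of _ "bcut X l Btt"]) (auto simp: bcut_def X_def)
      qed
    qed
  qed
  have genB: "\<forall>g\<in>?G. boxp T2 Bff g"
  proof
    fix g assume "g \<in> ?G"
    then obtain l where l: "l \<in> btop T1 T2" "g = (\<lambda>p. l (fst p)) \<or> g = (\<lambda>p. l (snd p))" by blast
    hence op: "openin T2 (bcut X l Bff)" using X2 by (simp add: btop_def)
    show "boxp T2 Bff g" unfolding boxp_def
    proof (intro ballI impI)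
      fix a b assume ab: "a \<in> topspace T2" "b \<in> topspace T2" "ble Bff (g (a,b))"
      show "\<exists>W Vv. openin T2 W \<and> openin T2 Vv \<and> a \<in> W \<and> b \<in> Vv \<and> (\<forall>s\<in>W. \<forall>t\<in>Vv. ble Bff (g (s,t)))"
        using l(2)
      proof
        assume g: "g = (\<lambda>p. l (fst p))"
        show ?thesis using g ab op X2
          by (intro exI[of _ "bcut X l Bff"] exI[of _ "topspace T2"]) (auto simp: bcut_def)
      next
        assume g: "g = (\<lambda>p. l (snd p))"
        show ?thesis using g ab op X2
          by (intro exI[of _ "topspace T2"] exI[of _ "bcut X l Bff"]) (auto simp: bcut_def)
      qed
    qed
  qed
  have nuG: "nu \<in> bgen ?G" using nu(1) by (simp add: prod_btop_def)
  have sep1: "sepR T1"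
  proof (rule sep_from[OF bgen_box[OF nuG _ genA]])
    show "\<forall>x\<in>topspace T1. \<forall>y\<in>topspace T1. ble Btt (nu (x,y)) \<longleftrightarrow> \<not> (\<forall>U. openin T1 U \<longrightarrow> x \<in> U \<longrightarrow> y \<in> U)"
      using nu(2) spec_tt[OF assms(1)] ble_neg X_def by simp
  qed simp
  have sep2: "sepR T2"
  proof (rule sep_from[OF bgen_box[OF nuG _ genB]])
    show "\<forall>x\<in>topspace T2. \<forall>y\<in>topspace T2. ble Bff (nu (x,y)) \<longleftrightarrow> \<not> (\<forall>U. openin T2 U \<longrightarrow> x \<in> U \<longrightarrow> y \<in> U)"
      using nu(2) spec_ff[OF assms(1)] ble_neg X_def X2 by simp
  qed simp
  show ?thesis unfolding d_sober_def
  proof (intro allI impI)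
    fix p q assume dp: "d_point T1 T2 p q"
    hence fp: "frame_hom2 T1 p" and fq: "frame_hom2 T2 q" by (auto simp: d_point_def)
    obtain x1 where x1: "x1 \<in> X" "\<forall>U. openin T1 U \<longrightarrow> (p U \<longleftrightarrow> x1 \<in> U)"
      using frame_point[OF fp sep1] X_def by blast
    obtain x2 where x2: "x2 \<in> X" "\<forall>U. openin T2 U \<longrightarrow> (q U \<longleftrightarrow> x2 \<in> U)"
      using frame_point[OF fq sep2] X2 by blast
    define O1 where "O1 = \<Union>{U. openin T1 U \<and> x1 \<notin> U}"
    define O2 where "O2 = \<Union>{U. openin T2 U \<and> x2 \<notin> U}"
    have o1: "openin T1 O1" unfolding O1_def by auto
    have o2: "openin T2 O2" unfolding O2_def by auto
    have "\<not> p O1" using x1 o1 O1_def by auto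
    moreover have "\<not> q O2" using x2 o2 O2_def by auto
    moreover have "\<forall>U V. openin T1 U \<and> openin T2 V \<and> U \<union> V = topspace T1 \<longrightarrow> p U \<or> q V"
      using dp by (simp add: d_point_def)
    ultimately have "O1 \<union> O2 \<noteq> topspace T1" using o1 o2 by blast
    moreover have "O1 \<union> O2 \<subseteq> X" using openin_subset[OF o1] openin_subset[OF o2] X_def X2 by auto
    ultimately obtain x where x: "x \<in> X" "x \<notin> O1" "x \<notin> O2" using X_def by blast
    have e1: "p U \<longleftrightarrow> x \<in> U" if U: "openin T1 U" for U
    proof -
      have "x \<in> U \<longleftrightarrow> x1 \<in> U"
      proof
        assume "x \<in> U" thus "x1 \<in> U" using x U O1_def by auto
      next
        assume xU: "x1 \<in> U"
        show "x \<in> U"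
        proof (rule ccontr)
          assume "x \<notin> U"
          then obtain W Vv where "openin T1 W" "openin T1 Vv" "x1 \<in> W" "x \<in> Vv" "W \<inter> Vv = {}"
            using sepRD[OF sep1, of x x1 U] x x1 xU U X_def by blast
          hence "x \<in> O1" unfolding O1_def by blast
          thus False using x by simp
        qed
      qed
      thus ?thesis using x1 U by simp
    qed
    have e2: "q U \<longleftrightarrow> x \<in> U" if U: "openin T2 U" for U
    proof -
      have "x \<in> U \<longleftrightarrow> x2 \<in> U"
      proof
        assume "x \<in> U" thus "x2 \<in> U" using x U O2_def by auto
      next
        assume xU: "x2 \<in> U"
        show "x \<in> U"
        proof (rule ccontr)
          assume "x \<notin> U"
          then obtain W Vv where "openin T2 W" "openin T2 Vv" "x2 \<in> W" "x \<in> Vv" "W \<inter> Vv = {}"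
            using sepRD[OF sep2, of x x2 U] x x2 xU U X2 by blast
          hence "x \<in> O2" unfolding O2_def by blast
          thus False using x by simp
        qed
      qed
      thus ?thesis using x2 U by simp
    qed
    show "\<exists>!x. x \<in> topspace T1 \<and> d_point_eq T1 T2 (p, q) (pt_of x)"
    proof
      have "d_point_eq T1 T2 (p, q) (pt_of x)"
        unfolding d_point_eq_def pt_of_def fst_conv snd_conv
      proof (intro conjI allI impI)
        fix U assume "openin T1 U" thus "p U = (x \<in> U)" by (rule e1)
      next
        fix U assume "openin T2 U" thus "q U = (x \<in> U)" by (rule e2)
      qed
      thus "x \<in> topspace T1 \<and> d_point_eq T1 T2 (p, q) (pt_of x)"
        using x(1) X_def by simp
    next
      fix y assume y: "y \<in> topspace T1 \<and> d_point_eq T1 T2 (p, q) (pt_of y)"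
      hence dq: "d_point_eq T1 T2 (p, q) (pt_of y)" by simp
      have f1: "\<forall>U. openin T1 U \<longrightarrow> (y \<in> U \<longleftrightarrow> x \<in> U)"
      proof (intro allI impI)
        fix U assume U: "openin T1 U"
        have "p U = (y \<in> U)" using dq U by (simp add: d_point_eq_def pt_of_def)
        thus "y \<in> U \<longleftrightarrow> x \<in> U" using e1[OF U] by simp
      qed
      have f2: "\<forall>U. openin T2 U \<longrightarrow> (y \<in> U \<longleftrightarrow> x \<in> U)"
      proof (intro allI impI)
        fix U assume U: "openin T2 U"
        have "q U = (y \<in> U)" using dq U by (simp add: d_point_eq_def pt_of_def)
        thus "y \<in> U \<longleftrightarrow> x \<in> U" using e2[OF U] by simp
      qed
      have yX: "y \<in> topspace T1" using y by (rule conjunct1)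
      have xX: "x \<in> topspace T1" using x(1) unfolding X_def .
      have s1: "ble Btt (spec_order T1 T2 y x)" using spec_tt[OF assms(1) yX xX] f1 by blast
      have s2: "ble Bff (spec_order T1 T2 y x)" using spec_ff[OF assms(1) yX xX] f2 by blast
      have s3: "ble Btt (spec_order T1 T2 x y)" using spec_tt[OF assms(1) xX yX] f1 by blast
      have s4: "ble Bff (spec_order T1 T2 x y)" using spec_ff[OF assms(1) xX yX] f2 by blast
      have q1: "spec_order T1 T2 y x = B1" using s1 s2 B1_iff by blast
      have q2: "spec_order T1 T2 x y = B1" using s3 s4 B1_iff by blast
      have T0': "\<forall>x\<in>topspace T1. \<forall>y\<in>topspace T1.
          spec_order T1 T2 x y = B1 \<and> spec_order T1 T2 y x = B1 \<longrightarrow> x = y"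
        using T0 unfolding btop_T0_def .
      show "y = x" by (rule mp[OF bspec[OF bspec[OF T0' yX] xX] conjI[OF q1 q2]])
    qed
  qed
qed

end
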